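(* Let $n\ge 2$ and $d\ge n+1$. For every Perazzo form $f$ of degree $d$ in $S$, the $h$-vector of $A_f$ satisfies $$h_i(A_f)\ \le\ \min\big((n+2)i+1,\ d+2\big)\quad\text{for }1\le i\le\lfloor d/2\rfloor$$ (and $h_i=h_{d-i}$). Moreover there exists a Perazzo form $f$ of degree $d$ (with $g=0$) for which equality holds for all $1\le i\le \lfloor d/2\rfloor$. Thus the componentwise maximum $h$-vector is $h_i=\min((n+2)i+1,d+2)$ for $1\le i\le\lfloor d/2\rfloor$, extended by symmetry, with $h_0=h_d=1$.
   Context: $K$ is an algebraically closed field of characteristic zero. $S=K[x_0,\dots,x_n,u,v]$ and $R=K[y_0,\dots,y_n,U,V]$ acts on $S$ by differentiation ($y_i=\partial/\partial x_i$, $U=\partial/\partial u$, $V=\partial/\partial v$); write $\theta\circ f$ for this action. A Perazzo form of degree $d$ is $f=x_0p_0+x_1p_1+\cdots+x_np_n+g$ where $p_0,\dots,p_n\in K[u,v]_{d-1}$ are linearly independent but algebraically dependent forms and $g\in K[u,v]_d$. $\operatorname{Ann}_R(f)=\{\theta\in R:\theta\circ f=0\}$ and $A_f=R/\operatorname{Ann}_R(f)$ is a graded artinian Gorenstein algebra of socle degree $d$; its $h$-vector is $h_i=\dim_K [A_f]_i$, which equals the dimension of the $K$-span of all order-$i$ partial derivatives of $f$, and satisfies $h_i=h_{d-i}$. *)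

theory Defs
  imports "HOL-Library.Poly_Mapping" "HOL-Computational_Algebra.Polynomial"
begin

text \<open>Variable index j stands for x_j
(0 <= j <= n), index n+1 for u and index n+2 for v.\<close>

type_synonym 'a mpoly = "(nat \<Rightarrow>\<^sub>0 nat) \<Rightarrow>\<^sub>0 'a"

definition mvar :: "nat \<Rightarrow> 'a::comm_ring_1 mpoly" where
  "mvar j = Poly_Mapping.single (Poly_Mapping.single j 1) 1"

definition mconst :: "'a::comm_ring_1 \<Rightarrow> 'a mpoly" where
  "mconst c = Poly_Mapping.single 0 c"

definition mscale :: "'a::field \<Rightarrow> 'a mpoly \<Rightarrow> 'a mpoly" where
  "mscale c p = Poly_Mapping.map (\<lambda>x. c * x) p"

definition mdeg :: "(nat \<Rightarrow>\<^sub>0 nat) \<Rightarrow> nat" where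
  "mdeg m = (\<Sum>j\<in>Poly_Mapping.keys m. Poly_Mapping.lookup m j)"

definition is_form_in :: "nat set \<Rightarrow> nat \<Rightarrow> 'a::comm_ring_1 mpoly \<Rightarrow> bool" where
  "is_form_in V e p \<longleftrightarrow> (\<forall>m\<in>Poly_Mapping.keys p. Poly_Mapping.keys m \<subseteq> V \<and> mdeg m = e)"

definition mderiv :: "nat \<Rightarrow> 'a::comm_ring_1 mpoly \<Rightarrow> 'a mpoly" where
  "mderiv i p = (\<Sum>m\<in>Poly_Mapping.keys p.
      Poly_Mapping.single (m - Poly_Mapping.single i 1) (of_nat (Poly_Mapping.lookup m i) * Poly_Mapping.lookup p m))"

definition msubst :: "'a::comm_ring_1 mpoly \<Rightarrow> (nat \<Rightarrow> 'a mpoly) \<Rightarrow> 'a mpoly" where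
  "msubst F p = (\<Sum>m\<in>Poly_Mapping.keys F. mconst (Poly_Mapping.lookup F m) * (\<Prod>j\<in>Poly_Mapping.keys m. p j ^ Poly_Mapping.lookup m j))"

definition perazzo_data :: "nat \<Rightarrow> nat \<Rightarrow> (nat \<Rightarrow> 'a::field mpoly) \<Rightarrow> 'a mpoly \<Rightarrow> bool" where
  "perazzo_data n d p g \<longleftrightarrow>
     (\<forall>j\<le>n. is_form_in {n+1, n+2} (d - 1) (p j)) \<and>
     (\<forall>c. (\<Sum>j\<le>n. mscale (c j) (p j)) = 0 \<longrightarrow> (\<forall>j\<le>n. c j = 0)) \<and>
     (\<exists>F::'a mpoly. F \<noteq> 0 \<and> (\<forall>m\<in>Poly_Mapping.keys F. Poly_Mapping.keys m \<subseteq> {0..n}) \<and> msubst F p = 0) \<and>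
     is_form_in {n+1, n+2} d g"

definition perazzo_poly :: "nat \<Rightarrow> (nat \<Rightarrow> 'a::field mpoly) \<Rightarrow> 'a mpoly \<Rightarrow> 'a mpoly" where
  "perazzo_poly n p g = (\<Sum>j\<le>n. mvar j * p j) + g"

definition is_perazzo_form :: "nat \<Rightarrow> nat \<Rightarrow> 'a::field mpoly \<Rightarrow> bool" where
  "is_perazzo_form n d f \<longleftrightarrow> (\<exists>p g. perazzo_data n d p g \<and> f = perazzo_poly n p g)"

definition partials :: "nat \<Rightarrow> nat \<Rightarrow> 'a::comm_ring_1 mpoly \<Rightarrow> 'a mpoly set" where
  "partials n i f = {foldr mderiv js f | js. length js = i \<and> set js \<subseteq> {0..n+2}}"

text \<open>h_i(A_f) = dimension of the K-span of the order-i partial derivatives of f.\<close>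
definition hvec :: "nat \<Rightarrow> 'a::field mpoly \<Rightarrow> nat \<Rightarrow> nat" where
  "hvec n f i = vector_space.dim mscale (partials n i f)"

end

theory Submission
  imports Defs
begin


abbreviation ev :: "nat \<Rightarrow> (nat \<Rightarrow>\<^sub>0 nat)" where "ev k \<equiv> Poly_Mapping.single k 1"

lemma lookup_mscale[simp]: "Poly_Mapping.lookup (mscale c p) m = c * Poly_Mapping.lookup p m"
  unfolding mscale_def by (simp add: Poly_Mapping.map.rep_eq when_def)

lemma vs_mscale: "vector_space (mscale :: 'a::field \<Rightarrow> 'a mpoly \<Rightarrow> 'a mpoly)"
  by unfold_locales (auto intro!: poly_mapping_eqI simp: lookup_add algebra_simps)

lemma lookup_mderiv:
  "Poly_Mapping.lookup (mderiv i p) m = of_nat (Poly_Mapping.lookup m i + 1) * Poly_Mapping.lookup p (m + ev i)"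
proof -
  have "Poly_Mapping.lookup (mderiv i p) m =
     (\<Sum>k\<in>Poly_Mapping.keys p. (if k = m + ev i then of_nat (Poly_Mapping.lookup k i) * Poly_Mapping.lookup p k else 0))"
    unfolding mderiv_def lookup_sum
  proof (rule sum.cong[OF refl])
    fix k assume "k \<in> Poly_Mapping.keys p"
    show "Poly_Mapping.lookup (Poly_Mapping.single (k - ev i) (of_nat (Poly_Mapping.lookup k i) * Poly_Mapping.lookup p k)) m =
         (if k = m + ev i then of_nat (Poly_Mapping.lookup k i) * Poly_Mapping.lookup p k else 0)"
    proof (cases "Poly_Mapping.lookup k i = 0")
      case True
      then have "k \<noteq> m + ev i" by (metis lookup_add lookup_single_eq add_is_0 one_neq_zero)
      then show ?thesis using True by (simp add: lookup_single when_def)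
    next
      case False
      have "(k - ev i = m) \<longleftrightarrow> (k = m + ev i)"
      proof
        assume "k - ev i = m"
        then show "k = m + ev i" using False
          by (auto intro!: poly_mapping_eqI simp: lookup_add lookup_minus lookup_single when_def)
      next
        assume "k = m + ev i" then show "k - ev i = m"
          by (auto intro!: poly_mapping_eqI simp: lookup_add lookup_minus lookup_single when_def)
      qed
      then show ?thesis by (auto simp: lookup_single when_def)
    qed
  qed
  also have "\<dots> = of_nat (Poly_Mapping.lookup m i + 1) * Poly_Mapping.lookup p (m + ev i)"
    by (simp add: lookup_add in_keys_iff)
  finally show ?thesis .
qed


lemma mderiv_commute: "mderiv i (mderiv j p) = mderiv j (mderiv i p)"
  apply (rule poly_mapping_eqI)
  apply (simp add: lookup_mderiv lookup_add lookup_single when_def algebra_simps)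
  done

lemma foldr_mderiv_commute: "foldr mderiv zs (mderiv x q) = mderiv x (foldr mderiv zs q)"
  by (induction zs) (simp_all add: mderiv_commute)

fun dc :: "nat list \<Rightarrow> (nat \<Rightarrow>\<^sub>0 nat) \<Rightarrow> nat" where
  "dc [] m = 1"
| "dc (k # js) m = (Poly_Mapping.lookup m k + 1) * dc js (m + ev k)"

definition cnt :: "nat list \<Rightarrow> (nat \<Rightarrow>\<^sub>0 nat)" where
  "cnt js = sum_list (map ev js)"

lemma cnt_simps[simp]: "cnt [] = 0" "cnt (k # js) = ev k + cnt js"
  by (simp_all add: cnt_def)

lemma dc_pos: "dc js m > 0"
  by (induction js arbitrary: m) auto

lemma lookup_foldr_mderiv:
  "Poly_Mapping.lookup (foldr mderiv js p) m = of_nat (dc js m) * Poly_Mapping.lookup p (m + cnt js)"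
  by (induction js arbitrary: m) (simp_all add: lookup_mderiv add.assoc algebra_simps)

lemma lookup_foldr_mderiv_nz:
  fixes p :: "'a::field_char_0 mpoly"
  shows "Poly_Mapping.lookup (foldr mderiv js p) m \<noteq> 0 \<longleftrightarrow> Poly_Mapping.lookup p (m + cnt js) \<noteq> 0"
  using dc_pos[of js m] by (simp add: lookup_foldr_mderiv)

definition DD :: "nat \<Rightarrow> nat \<Rightarrow> nat \<Rightarrow> nat \<Rightarrow> 'a::comm_ring_1 mpoly \<Rightarrow> 'a mpoly" where
  "DD u v a b q = foldr mderiv (replicate a u @ replicate b v) q"

lemma DD_u: "mderiv u (DD u v a b q) = DD u v (Suc a) b q"
  by (simp add: DD_def)

lemma DD_v: "mderiv v (DD u v a b q) = DD u v a (Suc b) q"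
proof -
  have "DD u v a (Suc b) q = foldr mderiv (replicate a u) (mderiv v (foldr mderiv (replicate b v) q))"
    by (simp only: DD_def foldr_append replicate_Suc foldr_Cons o_apply)
  also have "\<dots> = mderiv v (DD u v a b q)"
    by (simp only: foldr_mderiv_commute DD_def foldr_append o_apply)
  finally show ?thesis by simp
qed

lemma normal_form:
  assumes "set js \<subseteq> {0..n+2}"
  shows "\<exists>X a b. length X + a + b = length js \<and> set X \<subseteq> {0..n} \<and>
           foldr mderiv js q = foldr mderiv X (DD (n+1) (n+2) a b q)"
  using assms
proof (induction js)
  case Nil
  show ?case by (rule exI[of _ "[]"], rule exI[of _ 0], rule exI[of _ 0]) (simp add: DD_def)
next
  case (Cons k js)
  then obtain X a b where X: "length X + a + b = length js" "set X \<subseteq> {0..n}"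
    "foldr mderiv js q = foldr mderiv X (DD (n+1) (n+2) a b q)" by auto
  have k: "k \<le> n \<or> k = n+1 \<or> k = n+2" using Cons.prems by auto
  show ?case
  proof (cases "k \<le> n")
    case True
    then show ?thesis using X by (intro exI[of _ "k # X"] exI[of _ a] exI[of _ b]) auto
  next
    case False
    then have "k = n+1 \<or> k = n+2" using k by auto
    then show ?thesis
    proof
      assume kk: "k = n+1"
      show ?thesis using X kk
        by (intro exI[of _ X] exI[of _ "Suc a"] exI[of _ b])
           (simp add: foldr_mderiv_commute[symmetric] DD_u)
    next
      assume kk: "k = n+2"
      show ?thesis using X kk
        by (intro exI[of _ X] exI[of _ a] exI[of _ "Suc b"])
           (simp add: foldr_mderiv_commute[symmetric] DD_v)
    qed
  qed
qed


interpretation mvs: vector_space "mscale :: 'a::field \<Rightarrow> 'a mpoly \<Rightarrow> 'a mpoly"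
  by (rule vs_mscale)

lemma poly_sum_singles: "q = (\<Sum>k\<in>Poly_Mapping.keys q. Poly_Mapping.single k (Poly_Mapping.lookup q k))"
  by (rule poly_mapping_eqI) (simp add: lookup_sum lookup_single when_def in_keys_iff)

lemma mscale_single1: "mscale c (Poly_Mapping.single k (1::'a::field)) = Poly_Mapping.single k c"
  by (rule poly_mapping_eqI) (simp add: lookup_single when_def)

lemma in_span_monos:
  fixes q :: "'a::field mpoly"
  assumes "\<And>m. m \<in> Poly_Mapping.keys q \<Longrightarrow> m \<in> T"
  shows "q \<in> mvs.span ((\<lambda>m. Poly_Mapping.single m 1) ` T)"
proof -
  have "q = (\<Sum>k\<in>Poly_Mapping.keys q. mscale (Poly_Mapping.lookup q k) (Poly_Mapping.single k 1))"
    by (subst poly_sum_singles) (simp add: mscale_single1)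
  also have "\<dots> \<in> mvs.span ((\<lambda>m. Poly_Mapping.single m 1) ` T)"
    by (intro mvs.span_sum mvs.span_scale mvs.span_base) (use assms in auto)
  finally show ?thesis .
qed

lemma lookup_mvar_mult:
  "Poly_Mapping.lookup (mvar j * q) m =
     (if 1 \<le> Poly_Mapping.lookup m j then Poly_Mapping.lookup q (m - ev j) else 0)"
proof -
  have "mvar j * q = (\<Sum>k\<in>Poly_Mapping.keys q. Poly_Mapping.single (ev j + k) (Poly_Mapping.lookup q k))"
    by (subst poly_sum_singles) (simp add: mvar_def sum_distrib_left mult_single)
  have eq: "(ev j + k = m) \<longleftrightarrow> (k = m - ev j \<and> 1 \<le> Poly_Mapping.lookup m j)" for k
  proof
    assume h: "ev j + k = m"
    then have "1 \<le> Poly_Mapping.lookup m j" by (auto simp: lookup_add)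
    moreover have "k = m - ev j" using h
      by (auto intro!: poly_mapping_eqI simp: lookup_add lookup_minus lookup_single when_def)
    ultimately show "k = m - ev j \<and> 1 \<le> Poly_Mapping.lookup m j" by simp
  next
    assume h: "k = m - ev j \<and> 1 \<le> Poly_Mapping.lookup m j"
    then show "ev j + k = m"
      by (auto intro!: poly_mapping_eqI simp: lookup_add lookup_minus lookup_single when_def)
  qed
  have "Poly_Mapping.lookup (mvar j * q) m =
      (\<Sum>k\<in>Poly_Mapping.keys q. if k = m - ev j \<and> 1 \<le> Poly_Mapping.lookup m j then Poly_Mapping.lookup q k else 0)"
    by (subst \<open>mvar j * q = _\<close>) (simp only: lookup_sum lookup_single when_def eq)
  also have "\<dots> = (if 1 \<le> Poly_Mapping.lookup m j then Poly_Mapping.lookup q (m - ev j) else 0)"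
    by (auto simp: sum.delta' in_keys_iff)
  finally show ?thesis .
qed

lemma lookup_perazzo:
  "Poly_Mapping.lookup (perazzo_poly n p g) m =
    (\<Sum>j\<le>n. if 1 \<le> Poly_Mapping.lookup m j then Poly_Mapping.lookup (p j) (m - ev j) else 0)
     + Poly_Mapping.lookup g m"
  by (simp add: perazzo_poly_def lookup_add lookup_sum lookup_mvar_mult)

lemma lookup_cnt: "Poly_Mapping.lookup (cnt js) k = length (filter ((=) k) js)"
  by (induction js) (auto simp: lookup_add lookup_single when_def)

lemma mdeg_eq:
  assumes "finite S" "Poly_Mapping.keys m \<subseteq> S"
  shows "mdeg m = (\<Sum>k\<in>S. Poly_Mapping.lookup m k)"
  unfolding mdeg_def using assms by (intro sum.mono_neutral_left) (auto simp: in_keys_iff)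

lemma form_zero:
  assumes "is_form_in {n+1, n+2} e q" "k \<le> n" "1 \<le> Poly_Mapping.lookup m k"
  shows "Poly_Mapping.lookup q m = 0"
proof (rule ccontr)
  assume "Poly_Mapping.lookup q m \<noteq> 0"
  then have "m \<in> Poly_Mapping.keys q" by (simp add: in_keys_iff)
  then have "Poly_Mapping.keys m \<subseteq> {n+1, n+2}" using assms(1) by (auto simp: is_form_in_def)
  moreover have "k \<in> Poly_Mapping.keys m" using assms(3) by (simp add: in_keys_iff)
  ultimately show False using assms(2) by auto
qed


lemma lookup_cnt_rep:
  "Poly_Mapping.lookup (cnt (replicate a u @ replicate b v)) k = (if k = u then a else 0) + (if k = v then b else 0)"
  by (simp add: lookup_cnt)

lemma perazzo_zero2:
  assumes fp: "\<forall>j\<le>n. is_form_in {n+1, n+2} (d-1) (p j)" and fg: "is_form_in {n+1, n+2} d g"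
    and j: "j1 \<le> n" "j2 \<le> n"
  shows "Poly_Mapping.lookup (perazzo_poly n p g) (w + ev j1 + ev j2) = 0"
proof -
  have Z: "(if 1 \<le> Poly_Mapping.lookup (w + ev j1 + ev j2) j then Poly_Mapping.lookup (p j) (w + ev j1 + ev j2 - ev j) else 0) = 0"
    if jn: "j \<in> {..n}" for j
  proof -
    define k where "k = (if j = j1 then j2 else j1)"
    have jn': "j \<le> n" using jn by simp
    have kn: "k \<le> n" using j by (simp add: k_def)
    have l: "1 \<le> Poly_Mapping.lookup (w + ev j1 + ev j2 - ev j) k"
      by (auto simp: k_def lookup_add lookup_minus lookup_single when_def)
    show ?thesis using form_zero[of n "d-1" "p j" k, OF _ kn l] fp jn' by auto
  qed
  have "(\<Sum>j\<le>n. if 1 \<le> Poly_Mapping.lookup (w + ev j1 + ev j2) j then Poly_Mapping.lookup (p j) (w + ev j1 + ev j2 - ev j) else 0) = 0"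
    by (intro sum.neutral ballI Z)
  moreover have "Poly_Mapping.lookup g (w + ev j1 + ev j2) = 0"
    using form_zero[OF fg j(1)] by (simp add: lookup_add)
  ultimately show ?thesis by (simp only: lookup_perazzo add_0)
qed

lemma typeB_keys:
  fixes p :: "nat \<Rightarrow> 'a::field_char_0 mpoly"
  assumes fp: "\<forall>j\<le>n. is_form_in {n+1, n+2} (d-1) (p j)" and fg: "is_form_in {n+1, n+2} d g"
    and j: "j \<le> n"
    and mk: "m \<in> Poly_Mapping.keys (mderiv j (DD (n+1) (n+2) a b (perazzo_poly n p g)))"
  shows "m = Poly_Mapping.single (n+1) (Poly_Mapping.lookup m (n+1)) + Poly_Mapping.single (n+2) (Poly_Mapping.lookup m (n+2))
     \<and> Poly_Mapping.lookup m (n+1) + Poly_Mapping.lookup m (n+2) + a + b = d - 1"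
proof -
  define js where "js = j # replicate a (n+1) @ replicate b (n+2)"
  define M where "M = m + cnt js"
  have eqf: "mderiv j (DD (n+1) (n+2) a b (perazzo_poly n p g)) = foldr mderiv js (perazzo_poly n p g)"
    by (simp add: js_def DD_def)
  have lM: "Poly_Mapping.lookup M k = Poly_Mapping.lookup m k + (if k = j then 1 else 0)
      + (if k = n+1 then a else 0) + (if k = n+2 then b else 0)" for k
    using j by (simp add: M_def js_def lookup_add lookup_cnt_rep lookup_single when_def)
  have nz: "Poly_Mapping.lookup (perazzo_poly n p g) M \<noteq> 0"
    using mk unfolding eqf in_keys_iff lookup_foldr_mderiv_nz M_def .
  have g0: "Poly_Mapping.lookup g M = 0"
    using form_zero[OF fg j, of M] lM by simp
  then have "(\<Sum>j\<le>n. if 1 \<le> Poly_Mapping.lookup M j then Poly_Mapping.lookup (p j) (M - ev j) else 0) \<noteq> 0"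
    using nz by (simp add: lookup_perazzo)
  then obtain j' where j': "j' \<le> n" "1 \<le> Poly_Mapping.lookup M j'" "Poly_Mapping.lookup (p j') (M - ev j') \<noteq> 0"
    by (smt (verit, ccfv_threshold) atMost_iff sum.neutral)
  have "j' = j"
  proof (rule ccontr)
    assume "j' \<noteq> j"
    then have "1 \<le> Poly_Mapping.lookup (M - ev j') j" using lM
      by (simp add: lookup_minus lookup_single when_def)
    then show False using form_zero[of n "d-1" "p j'" j "M - ev j'"] fp j j' by auto
  qed
  define M' where "M' = M - ev j"
  have lM': "Poly_Mapping.lookup M' k = Poly_Mapping.lookup m k
      + (if k = n+1 then a else 0) + (if k = n+2 then b else 0)" for k
    using lM[of k] by (simp add: M'_def lookup_minus lookup_single when_def)
  have key: "M' \<in> Poly_Mapping.keys (p j)" using j' \<open>j' = j\<close> by (simp add: M'_def in_keys_iff)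
  then have kM': "Poly_Mapping.keys M' \<subseteq> {n+1, n+2}" and dM': "mdeg M' = d - 1"
    using fp j by (auto simp: is_form_in_def)
  have m0: "Poly_Mapping.lookup m k = 0" if "k \<noteq> n+1" "k \<noteq> n+2" for k
  proof -
    have "k \<notin> Poly_Mapping.keys M'" using kM' that by auto
    then show ?thesis using lM'[of k] that by (simp add: in_keys_iff)
  qed
  have "mdeg M' = Poly_Mapping.lookup M' (n+1) + Poly_Mapping.lookup M' (n+2)"
    using mdeg_eq[OF _ kM'] by simp
  then have "Poly_Mapping.lookup m (n+1) + Poly_Mapping.lookup m (n+2) + a + b = d - 1"
    using dM' lM' by simp
  moreover have "m = Poly_Mapping.single (n+1) (Poly_Mapping.lookup m (n+1)) + Poly_Mapping.single (n+2) (Poly_Mapping.lookup m (n+2))"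
    by (rule poly_mapping_eqI) (auto simp: lookup_add lookup_single when_def m0)
  ultimately show ?thesis by simp
qed


definition Aset :: "nat \<Rightarrow> nat \<Rightarrow> 'a::comm_ring_1 mpoly \<Rightarrow> 'a mpoly set" where
  "Aset n i f = (\<lambda>a. DD (n+1) (n+2) a (i-a) f) ` {0..i}"

definition Bset :: "nat \<Rightarrow> nat \<Rightarrow> 'a::comm_ring_1 mpoly \<Rightarrow> 'a mpoly set" where
  "Bset n i f = (\<lambda>(j,a). mderiv j (DD (n+1) (n+2) a (i-1-a) f)) ` ({0..n} \<times> {0..<i})"

definition Mset :: "nat \<Rightarrow> nat \<Rightarrow> 'a::comm_ring_1 mpoly set" where
  "Mset n e = (\<lambda>m. Poly_Mapping.single m 1) ` ((\<lambda>c. Poly_Mapping.single (n+1) c + Poly_Mapping.single (n+2) (e-c)) ` {0..e})"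

lemma card_Aset: "card (Aset n i f) \<le> i + 1"
  unfolding Aset_def using card_image_le[of "{0..i}"] by fastforce

lemma card_Bset: "card (Bset n i f) \<le> (n+1) * i"
  unfolding Bset_def using card_image_le[of "{0..n} \<times> {0..<i}"] by (fastforce simp: card_cartesian_product)

lemma card_Mset: "card (Mset n e :: 'a::comm_ring_1 mpoly set) \<le> e + 1"
proof -
  have "card (Mset n e :: 'a mpoly set) \<le> card ((\<lambda>c. Poly_Mapping.single (n+1) c + Poly_Mapping.single (n+2) (e-c)) ` {0..e})"
    unfolding Mset_def by (rule card_image_le) simp
  also have "\<dots> \<le> card {0..e}" by (rule card_image_le) simp
  finally show ?thesis by simp
qed

lemma finite_sets: "finite (Aset n i f)" "finite (Bset n i f)" "finite (Mset n e)"
  by (simp_all add: Aset_def Bset_def Mset_def)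

lemma partials_classify:
  fixes p :: "nat \<Rightarrow> 'a::field_char_0 mpoly"
  assumes fp: "\<forall>j\<le>n. is_form_in {n+1, n+2} (d-1) (p j)" and fg: "is_form_in {n+1, n+2} d g"
    and q: "q \<in> partials n i (perazzo_poly n p g)"
  shows "q = 0 \<or> q \<in> Aset n i (perazzo_poly n p g) \<or>
     (q \<in> Bset n i (perazzo_poly n p g) \<and> q \<in> mvs.span (Mset n (d - i)))"
proof -
  define f where "f = perazzo_poly n p g"
  obtain js where js: "q = foldr mderiv js f" "length js = i" "set js \<subseteq> {0..n+2}"
    using q by (auto simp: partials_def f_def)
  obtain X a b where X: "length X + a + b = i" "set X \<subseteq> {0..n}"
    "q = foldr mderiv X (DD (n+1) (n+2) a b f)"
    using normal_form[OF js(3), of f] js by auto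
  show ?thesis
  proof (cases X)
    case Nil
    then have "q \<in> Aset n i f" using X unfolding Aset_def
      by (intro image_eqI[of _ _ a]) auto
    then show ?thesis by (simp add: f_def)
  next
    case (Cons j1 X1)
    show ?thesis
    proof (cases X1)
      case Nil
      have j1: "j1 \<le> n" using X Cons by auto
      have bb: "b = i - 1 - a" using X Cons Nil by simp
      have qe: "q = mderiv j1 (DD (n+1) (n+2) a (i-1-a) f)" using X Cons Nil bb by simp
      then have "q \<in> Bset n i f" using X Cons Nil j1 unfolding Bset_def
        by (intro image_eqI[of _ _ "(j1, a)"]) auto
      moreover have "q \<in> mvs.span (Mset n (d - i))"
        unfolding Mset_def
      proof (rule in_span_monos)
        fix m assume "m \<in> Poly_Mapping.keys q"
        then have "m \<in> Poly_Mapping.keys (mderiv j1 (DD (n+1) (n+2) a b (perazzo_poly n p g)))"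
          using X Cons Nil by (simp add: f_def)
        from typeB_keys[OF fp fg j1 this] have h1: "m = Poly_Mapping.single (n+1) (Poly_Mapping.lookup m (n+1)) + Poly_Mapping.single (n+2) (Poly_Mapping.lookup m (n+2))"
          and h2: "Poly_Mapping.lookup m (n+1) + Poly_Mapping.lookup m (n+2) + a + b = d - 1" by blast+
        have eq: "d - i - Poly_Mapping.lookup m (n+1) = Poly_Mapping.lookup m (n+2)"
          using h2 X Cons Nil by simp
        have "(\<lambda>c. Poly_Mapping.single (n+1) c + Poly_Mapping.single (n+2) (d - i - c)) (Poly_Mapping.lookup m (n+1)) = m"
          unfolding eq by (rule h1[symmetric])
        moreover have "Poly_Mapping.lookup m (n+1) \<in> {0..d-i}" using h2 X Cons Nil by simp
        ultimately show "m \<in> (\<lambda>c. Poly_Mapping.single (n+1) c + Poly_Mapping.single (n+2) (d - i - c)) ` {0..d - i}"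
          by (rule image_eqI[OF sym])
      qed
      ultimately show ?thesis by (simp add: f_def)
    next
      case (Cons j2 X2)
      have j: "j1 \<le> n" "j2 \<le> n" using X \<open>X = j1 # X1\<close> Cons by auto
      have "q = foldr mderiv (j1 # j2 # X2 @ replicate a (n+1) @ replicate b (n+2)) f"
        using X \<open>X = j1 # X1\<close> Cons by (simp add: DD_def)
      then have "q = 0"
        apply (intro poly_mapping_eqI)
        apply (simp only: lookup_foldr_mderiv cnt_simps f_def lookup_zero)
        using perazzo_zero2[OF fp fg j, of "_ + cnt (X2 @ replicate a (n+1) @ replicate b (n+2))"]
        by (simp add: ac_simps)
      then show ?thesis by simp
    qed
  qed
qed

lemma partials_span:
  fixes p :: "nat \<Rightarrow> 'a::field_char_0 mpoly"
  assumes fp: "\<forall>j\<le>n. is_form_in {n+1, n+2} (d-1) (p j)" and fg: "is_form_in {n+1, n+2} d g"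
  shows "partials n i (perazzo_poly n p g) \<subseteq> mvs.span (Aset n i (perazzo_poly n p g) \<union> Bset n i (perazzo_poly n p g))"
    "partials n i (perazzo_poly n p g) \<subseteq> mvs.span (Aset n i (perazzo_poly n p g) \<union> Mset n (d - i))"
proof -
  show "partials n i (perazzo_poly n p g) \<subseteq> mvs.span (Aset n i (perazzo_poly n p g) \<union> Bset n i (perazzo_poly n p g))"
  proof
    fix q assume "q \<in> partials n i (perazzo_poly n p g)"
    from partials_classify[OF fp fg this] show "q \<in> mvs.span (Aset n i (perazzo_poly n p g) \<union> Bset n i (perazzo_poly n p g))"
      by (auto intro: mvs.span_zero mvs.span_base)
  qed
  show "partials n i (perazzo_poly n p g) \<subseteq> mvs.span (Aset n i (perazzo_poly n p g) \<union> Mset n (d - i))"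
  proof
    fix q assume "q \<in> partials n i (perazzo_poly n p g)"
    from partials_classify[OF fp fg this] show "q \<in> mvs.span (Aset n i (perazzo_poly n p g) \<union> Mset n (d - i))"
      by (auto intro: mvs.span_zero mvs.span_base dest: mvs.span_mono[THEN subsetD, rotated])
  qed
qed

lemma hvec_upper:
  fixes p :: "nat \<Rightarrow> 'a::field_char_0 mpoly"
  assumes fp: "\<forall>j\<le>n. is_form_in {n+1, n+2} (d-1) (p j)" and fg: "is_form_in {n+1, n+2} d g"
    and i: "i \<le> d"
  shows "hvec n (perazzo_poly n p g) i \<le> min ((n + 2) * i + 1) (d + 2)"
proof -
  let ?f = "perazzo_poly n p g"
  have "hvec n ?f i \<le> card (Aset n i ?f \<union> Bset n i ?f)"
    unfolding hvec_def by (rule mvs.dim_le_card[OF partials_span(1)[OF fp fg]]) (simp add: finite_sets)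
  also have "\<dots> \<le> card (Aset n i ?f) + card (Bset n i ?f)" by (rule card_Un_le)
  also have "\<dots> \<le> (n+2) * i + 1" using card_Aset[of n i ?f] card_Bset[of n i ?f] by simp
  finally have 1: "hvec n ?f i \<le> (n+2) * i + 1" .
  have "hvec n ?f i \<le> card (Aset n i ?f \<union> Mset n (d - i))"
    unfolding hvec_def by (rule mvs.dim_le_card[OF partials_span(2)[OF fp fg]]) (simp add: finite_sets)
  also have "\<dots> \<le> card (Aset n i ?f) + card (Mset n (d - i) :: 'a mpoly set)" by (rule card_Un_le)
  also have "\<dots> \<le> d + 2" using card_Aset[of n i ?f] card_Mset[of n "d - i", where 'a='a] i by simp
  finally show ?thesis using 1 by simp
qed




definition tt :: "nat \<Rightarrow> nat \<Rightarrow> nat" where "tt n d = (d+1) div (n+2)"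
definition ss :: "nat \<Rightarrow> nat \<Rightarrow> nat" where "ss n d = d + 1 - (n+2) * tt n d"
definition aa :: "nat \<Rightarrow> nat \<Rightarrow> nat \<Rightarrow> nat" where "aa n d j = (j+1) * tt n d - 1 + min j (ss n d)"

context
  fixes n d :: nat
  assumes n2: "n \<ge> 2" and dn: "d \<ge> n + 1"
begin

lemma tt_facts: "tt n d \<ge> 1" "(n+2) * tt n d \<le> d + 1" "d + 1 < (n+2) * tt n d + (n+2)"
proof -
  have "(n+2) * ((d+1) div (n+2)) + (d+1) mod (n+2) = d + 1" by (rule mult_div_mod_eq)
  moreover have "(d+1) mod (n+2) < n+2" by simp
  ultimately show "(n+2) * tt n d \<le> d + 1" "d + 1 < (n+2) * tt n d + (n+2)"
    unfolding tt_def by linarith+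
  show "tt n d \<ge> 1"
  proof (rule ccontr)
    assume "\<not> tt n d \<ge> 1"
    then have "tt n d = 0" by simp
    then show False using \<open>(n+2) * ((d+1) div (n+2)) + (d+1) mod (n+2) = d + 1\<close> \<open>(d+1) mod (n+2) < n+2\<close> dn
      unfolding tt_def by simp
  qed
qed

lemma ss_le: "ss n d \<le> n + 1"
  using tt_facts unfolding ss_def by linarith

lemma four_tt: "4 * tt n d \<le> d + 1"
proof -
  have "4 * tt n d \<le> (n+2) * tt n d" using n2 by (intro mult_le_mono1) simp
  then show ?thesis using tt_facts by linarith
qed

lemma aa_mono: assumes "j < j'" shows "aa n d j + tt n d \<le> aa n d j'"
proof -
  have "(j+1) * tt n d + tt n d \<le> (j'+1) * tt n d"
  proof -
    have "(j+2) * tt n d \<le> (j'+1) * tt n d" using assms by (intro mult_le_mono1) simp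
    then show ?thesis by (simp add: algebra_simps)
  qed
  moreover have "(j+1) * tt n d \<ge> 1" using tt_facts by simp
  moreover have "min j (ss n d) \<le> min j' (ss n d)" using assms by simp
  ultimately show ?thesis unfolding aa_def by linarith
qed

lemma aa_mono_le: assumes "j \<le> j'" shows "aa n d j \<le> aa n d j'"
  using aa_mono[of j j'] assms by (cases "j = j'") auto

lemma aa_step: "aa n d (Suc j) \<le> aa n d j + tt n d + 1"
proof -
  have "(Suc j + 1) * tt n d = (j+1) * tt n d + tt n d" by (simp add: algebra_simps)
  moreover have "(j+1) * tt n d \<ge> 1" using tt_facts by simp
  moreover have "min (Suc j) (ss n d) \<le> min j (ss n d) + 1" by simp
  ultimately show ?thesis unfolding aa_def by linarith
qed

lemma aa0: "aa n d 0 = tt n d - 1" by (simp add: aa_def)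

lemma aan: "d - tt n d - 1 \<le> aa n d n" "aa n d n \<le> d - tt n d"
proof -
  have e: "(n+1) * tt n d + tt n d = (n+2) * tt n d" by (simp add: algebra_simps)
  have "(n+1) * tt n d \<ge> 1" using tt_facts by simp
  then show "d - tt n d - 1 \<le> aa n d n" "aa n d n \<le> d - tt n d"
    unfolding aa_def ss_def using e tt_facts by (auto simp: min_def)
qed

lemma aa_le: assumes "j \<le> n" shows "aa n d j \<le> d - 1"
  using aa_mono_le[OF assms] aan tt_facts by linarith

lemma aa_cover: "c \<le> aa n d j \<Longrightarrow> \<exists>j'\<le>j. c \<le> aa n d j' \<and> aa n d j' \<le> c + tt n d"
proof (induction j)
  case 0 then show ?case using aa0 by (intro exI[of _ 0]) auto
next
  case (Suc j)
  show ?case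
  proof (cases "c \<le> aa n d j")
    case True then show ?thesis using Suc.IH by (meson le_Suc_eq)
  next
    case False
    then show ?thesis using aa_step[of j] Suc.prems by (intro exI[of _ "Suc j"]) auto
  qed
qed

lemma condA: assumes "1 \<le> i" "i \<le> d div 2" "a \<le> i"
  shows "\<exists>j\<le>n. a \<le> aa n d j \<and> aa n d j + i \<le> d - 1 + a"
proof -
  have ti: "tt n d + i \<le> d - 1" using four_tt assms tt_facts dn n2 by linarith
  have "a \<le> aa n d n" using aan ti assms by linarith
  from aa_cover[OF this] obtain j where "j \<le> n" "a \<le> aa n d j" "aa n d j \<le> a + tt n d" by auto
  then show ?thesis using ti by (intro exI[of _ j]) auto
qed

definition CC :: "nat \<Rightarrow> nat set" where
  "CC i = {c. \<exists>j\<le>n. \<exists>a'<i. a' \<le> aa n d j \<and> c + a' = aa n d j \<and> c \<le> d - i}"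

lemma CC_sub: "CC i \<subseteq> {0..d-i}" by (auto simp: CC_def)

lemma card_CC: assumes "1 \<le> i" "i \<le> d div 2"
  shows "card (CC i) \<ge> min ((n+1) * i) (d - i + 1)"
proof (cases "i \<le> tt n d")
  case True
  have "(n+2) * i \<le> (n+2) * tt n d" using True by (rule mult_le_mono2)
  then have le: "(n+1) * i \<le> d - i + 1" using tt_facts by (simp add: algebra_simps)
  let ?h = "\<lambda>(j, a'). aa n d j - a'"
  have inj: "inj_on ?h ({0..n} \<times> {0..<i})"
  proof (rule inj_onI, clarify)
    fix j a' j2 a2 assume h: "j \<in> {0..n}" "a' \<in> {0..<i}" "j2 \<in> {0..n}" "a2 \<in> {0..<i}"
      "aa n d j - a' = aa n d j2 - a2"
    have "aa n d 0 \<le> aa n d j" "aa n d 0 \<le> aa n d j2" by (simp_all add: aa_mono_le)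
    then have lo: "a' \<le> aa n d j" "a2 \<le> aa n d j2" using aa0 True h by auto
    have lt: "a' < i" "a2 < i" using h by auto
    show "j = j2 \<and> a' = a2"
    proof (cases j j2 rule: linorder_cases)
      case less then show ?thesis using aa_mono[OF less] h(5) lt lo True by linarith
    next
      case greater then show ?thesis using aa_mono[OF greater] h(5) lt lo True by linarith
    next
      case equal then show ?thesis using h lo by simp
    qed
  qed
  have sub: "?h ` ({0..n} \<times> {0..<i}) \<subseteq> CC i"
  proof clarify
    fix j a' assume h: "j \<in> {0..n}" "a' \<in> {0..<i}"
    have "aa n d 0 \<le> aa n d j" by (simp_all add: aa_mono_le)
    then have lo: "a' \<le> aa n d j" using aa0 True h by auto
    have "aa n d j \<le> d - tt n d" using aa_mono_le[of j n] aan h by auto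
    then show "aa n d j - a' \<in> CC i" unfolding CC_def using h lo True
      by (intro CollectI exI[of _ j] conjI exI[of _ a']) auto
  qed
  have "(n+1) * i = card (?h ` ({0..n} \<times> {0..<i}))"
    using card_image[OF inj] by (simp add: card_cartesian_product)
  also have "\<dots> \<le> card (CC i)"
    by (rule card_mono[OF finite_subset[OF CC_sub] sub]) simp
  finally show ?thesis using le by simp
next
  case False
  have sub: "{0..d-i} \<subseteq> CC i"
  proof
    fix c assume c: "c \<in> {0..d-i}"
    have "c \<le> aa n d n" using c aan False by auto
    from aa_cover[OF this] obtain j where j: "j \<le> n" "c \<le> aa n d j" "aa n d j \<le> c + tt n d" by auto
    show "c \<in> CC i" unfolding CC_def using j c False
      by (intro CollectI exI[of _ j] conjI exI[of _ "aa n d j - c"]) auto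
  qed
  have "d - i + 1 \<le> card (CC i)"
    using card_mono[OF finite_subset[OF CC_sub] sub] by simp
  then show ?thesis by simp
qed

end



definition mono2 :: "nat \<Rightarrow> nat \<Rightarrow> nat \<Rightarrow> (nat \<Rightarrow>\<^sub>0 nat)" where
  "mono2 n x y = Poly_Mapping.single (n+1) x + Poly_Mapping.single (n+2) y"

lemma lookup_mono2: "Poly_Mapping.lookup (mono2 n x y) k = (if k = n+1 then x else 0) + (if k = n+2 then y else 0)"
  by (simp add: mono2_def lookup_add lookup_single when_def)

definition PP :: "nat \<Rightarrow> nat \<Rightarrow> nat \<Rightarrow> 'a::comm_ring_1 mpoly" where
  "PP n d j = Poly_Mapping.single (mono2 n (aa n d j) (d - 1 - aa n d j)) 1"

definition EE :: "nat \<Rightarrow> nat \<Rightarrow> nat \<Rightarrow> (nat \<Rightarrow>\<^sub>0 nat)" where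
  "EE n d j = ev j + mono2 n (aa n d j) (d - 1 - aa n d j)"

lemma lookup_EE: "j \<le> n \<Longrightarrow> Poly_Mapping.lookup (EE n d j) k =
   (if k = j then 1 else 0) + (if k = n+1 then aa n d j else 0) + (if k = n+2 then d - 1 - aa n d j else 0)"
  by (simp add: EE_def lookup_add lookup_single when_def lookup_mono2)

lemma EE_inj: "j \<le> n \<Longrightarrow> j' \<le> n \<Longrightarrow> EE n d j = EE n d j' \<Longrightarrow> j = j'"
  by (drule arg_cong[where f = "\<lambda>m. Poly_Mapping.lookup m j"]) (auto simp: lookup_EE split: if_splits)

lemma f0_eq: "perazzo_poly n (PP n d) 0 = (\<Sum>j\<le>n. Poly_Mapping.single (EE n d j) (1::'a::field))"
  by (simp add: perazzo_poly_def PP_def mvar_def mult_single EE_def)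

lemma lookup_f0: "Poly_Mapping.lookup (perazzo_poly n (PP n d) 0) m =
    (if \<exists>j\<le>n. m = EE n d j then (1::'a::field) else 0)"
proof (cases "\<exists>j\<le>n. m = EE n d j")
  case True
  then obtain j0 where j0: "j0 \<le> n" "m = EE n d j0" by auto
  have "Poly_Mapping.lookup (perazzo_poly n (PP n d) 0) m = (\<Sum>j\<le>n. if j = j0 then (1::'a) else 0)"
    unfolding f0_eq lookup_sum lookup_single when_def
    by (intro sum.cong refl) (use j0 EE_inj in auto)
  also have "\<dots> = 1" using j0 by simp
  finally show ?thesis using True by simp
next
  case False
  then show ?thesis unfolding f0_eq lookup_sum lookup_single when_def
    by (intro trans[OF sum.neutral]) auto
qed

lemma keys_foldr_f0:
  "m \<in> Poly_Mapping.keys (foldr mderiv js (perazzo_poly n (PP n d) 0 :: 'a::field_char_0 mpoly))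
    \<longleftrightarrow> (\<exists>j\<le>n. m + cnt js = EE n d j)"
  by (simp add: in_keys_iff lookup_foldr_mderiv_nz lookup_f0)




lemma keys_mono2: "Poly_Mapping.keys (mono2 n x y) \<subseteq> {n+1, n+2}"
  by (auto simp: in_keys_iff lookup_mono2 split: if_splits)

lemma mdeg_mono2: "mdeg (mono2 n x y) = x + y"
  by (subst mdeg_eq[OF _ keys_mono2]) (simp_all add: lookup_mono2)

lemma mono2_add: "mono2 n x y + mono2 n x' y' = mono2 n (x + x') (y + y')"
  by (rule poly_mapping_eqI) (simp add: lookup_add lookup_mono2)

lemma mono2_0: "mono2 n 0 0 = 0"
  by (rule poly_mapping_eqI) (simp add: lookup_mono2)

lemma single_mono2_pow:
  "(Poly_Mapping.single (mono2 n x y) (1::'a::comm_ring_1)) ^ r = Poly_Mapping.single (mono2 n (r * x) (r * y)) 1"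
  by (induction r) (simp_all add: mono2_0 mult_single mono2_add add.commute)

context
  fixes n d :: nat
  assumes n2: "n \<ge> 2" and dn: "d \<ge> n + 1"
begin

lemma PD1: "j \<le> n \<Longrightarrow> is_form_in {n+1, n+2} (d-1) (PP n d j :: 'a::comm_ring_1 mpoly)"
  using aa_le[OF n2 dn, of j] keys_mono2
  by (auto simp: is_form_in_def PP_def mdeg_mono2)

lemma mono2_inj: "mono2 n x y = mono2 n x' y' \<Longrightarrow> x = x'"
  by (drule arg_cong[where f = "\<lambda>m. Poly_Mapping.lookup m (n+1)"]) (simp add: lookup_mono2)

lemma aa_inj: "aa n d j = aa n d j' \<Longrightarrow> j = j'"
  using aa_mono[OF n2 dn, of j j'] aa_mono[OF n2 dn, of j' j] tt_facts[OF n2 dn]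
  by (cases j j' rule: linorder_cases) auto

lemma PD2:
  assumes "(\<Sum>j\<le>n. mscale (c j) (PP n d j)) = (0::'a::field mpoly)"
  shows "\<forall>j\<le>n. c j = 0"
proof (intro allI impI)
  fix j0 assume j0: "j0 \<le> n"
  have "0 = Poly_Mapping.lookup (\<Sum>j\<le>n. mscale (c j) (PP n d j)) (mono2 n (aa n d j0) (d - 1 - aa n d j0))"
    using assms by simp
  also have "\<dots> = (\<Sum>j\<le>n. if j = j0 then c j else 0)"
    unfolding lookup_sum lookup_mscale PP_def lookup_single when_def
    by (intro sum.cong refl) (auto dest: mono2_inj aa_inj)
  also have "\<dots> = c j0" using j0 by simp
  finally show "c j0 = 0" by simp
qed

lemma PD3: "\<exists>F::'a::comm_ring_1 mpoly. F \<noteq> 0 \<and> (\<forall>m\<in>Poly_Mapping.keys F. Poly_Mapping.keys m \<subseteq> {0..n}) \<and> msubst F (PP n d) = 0"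
proof -
  define A0 where "A0 = aa n d 0"
  define x where "x = aa n d 1 - aa n d 0"
  define y where "y = aa n d 2 - aa n d 1"
  have a1: "aa n d 1 = A0 + x" and a2: "aa n d 2 = A0 + x + y" and xp: "x > 0" and yp: "y > 0"
    using aa_mono[OF n2 dn, of 0 1] aa_mono[OF n2 dn, of 1 2] tt_facts[OF n2 dn]
    by (auto simp: A0_def x_def y_def)
  have "aa n d 2 \<le> d - 1" using aa_le[OF n2 dn, of 2] n2 by simp
  define z where "z = d - 1 - (A0 + x + y)"
  have z: "d - 1 = A0 + x + y + z" using \<open>aa n d 2 \<le> d - 1\<close> a2 unfolding z_def by linarith
  have dz: "d = Suc (A0 + x + y + z)" using z dn by linarith
  define M1 :: "nat \<Rightarrow>\<^sub>0 nat" where "M1 = Poly_Mapping.single 0 y + Poly_Mapping.single 2 x"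
  define M2 :: "nat \<Rightarrow>\<^sub>0 nat" where "M2 = Poly_Mapping.single 1 (x + y)"
  define F :: "'a mpoly" where "F = Poly_Mapping.single M1 1 - Poly_Mapping.single M2 1"
  have M12: "M1 \<noteq> M2"
    using xp yp by (auto dest!: arg_cong[where f = "\<lambda>m. Poly_Mapping.lookup m 1"] simp: M1_def M2_def lookup_add lookup_single)
  have lF: "Poly_Mapping.lookup F m = (if m = M1 then 1 else if m = M2 then -1 else 0)" for m
    using M12 by (auto simp: F_def lookup_minus lookup_single when_def)
  have kF: "Poly_Mapping.keys F = {M1, M2}"
    by (auto simp: in_keys_iff lF split: if_splits)
  have kM1: "Poly_Mapping.keys M1 = {0, 2}"
    using xp yp by (auto simp: in_keys_iff M1_def lookup_add lookup_single when_def split: if_splits)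
  have kM2: "Poly_Mapping.keys M2 = {1}"
    using xp yp by (auto simp: in_keys_iff M2_def lookup_add lookup_single when_def split: if_splits)
  have "F \<noteq> 0" using lF[of M1] by auto
  moreover have "\<forall>m\<in>Poly_Mapping.keys F. Poly_Mapping.keys m \<subseteq> {0..n}"
    using kF kM1 kM2 n2 by auto
  moreover have "msubst F (PP n d) = 0"
  proof -
    have "msubst F (PP n d) = mconst 1 * (PP n d 0 ^ y * PP n d 2 ^ x) + mconst (-1) * PP n d 1 ^ (x + y)"
    proof -
      have lM: "Poly_Mapping.lookup M1 0 = y" "Poly_Mapping.lookup M1 2 = x" "Poly_Mapping.lookup M2 (Suc 0) = x + y"
        by (simp_all add: M1_def M2_def lookup_add lookup_single)
      show ?thesis
        unfolding msubst_def kF using M12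
        by (simp add: lF kM1 kM2 lM)
    qed
    also have "\<dots> = 0"
    proof -
      have u: "y * aa n d 0 + x * aa n d 2 = (x+y) * aa n d 1"
        unfolding a1 a2 A0_def[symmetric] by (simp add: algebra_simps)
      have v: "y * (d - 1 - aa n d 0) + x * (d - 1 - aa n d 2) = (x+y) * (d - 1 - aa n d 1)"
        unfolding a1 a2 A0_def[symmetric] z by (simp add: algebra_simps)
      have "PP n d 0 ^ y * PP n d 2 ^ x = (PP n d 1 ^ (x + y) :: 'a mpoly)"
        unfolding PP_def single_mono2_pow mult_single mono2_add u v by simp
      then show ?thesis by (simp add: mconst_def single_uminus)
    qed
    finally show ?thesis .
  qed
  ultimately show ?thesis by blast
qed

lemma perazzo_PP: "perazzo_data n d (PP n d :: nat \<Rightarrow> 'a::field mpoly) 0"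
proof -
  have "\<forall>c. (\<Sum>j\<le>n. mscale (c j) (PP n d j)) = (0::'a mpoly) \<longrightarrow> (\<forall>j\<le>n. c j = 0)"
    using PD2 by blast
  moreover have "\<forall>j\<le>n. is_form_in {n+1, n+2} (d-1) (PP n d j :: 'a mpoly)" using PD1 by blast
  moreover have "is_form_in {n+1, n+2} d (0::'a mpoly)" by (simp add: is_form_in_def)
  ultimately show ?thesis unfolding perazzo_data_def using PD3 by blast
qed

end



lemma indep_disjoint:
  fixes S :: "'a::field mpoly set"
  assumes z: "0 \<notin> S" and dj: "\<And>x y. x \<in> S \<Longrightarrow> y \<in> S \<Longrightarrow> x \<noteq> y \<Longrightarrow> Poly_Mapping.keys x \<inter> Poly_Mapping.keys y = {}"
  shows "mvs.independent S"
  unfolding mvs.independent_explicit_finite_subsets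
proof (intro allI impI ballI)
  fix T u v assume T: "T \<subseteq> S" and fT: "finite T" and s: "(\<Sum>w\<in>T. mscale (u w) w) = 0" and v: "v \<in> T"
  have "v \<noteq> 0" using z T v by auto
  then obtain m where m: "m \<in> Poly_Mapping.keys v"
    by (metis all_not_in_conv keys_eq_empty)
  have "0 = Poly_Mapping.lookup (\<Sum>w\<in>T. mscale (u w) w) m" using s by simp
  also have "\<dots> = (\<Sum>w\<in>T. u w * Poly_Mapping.lookup w m)" by (simp add: lookup_sum)
  also have "\<dots> = u v * Poly_Mapping.lookup v m + (\<Sum>w\<in>T-{v}. u w * Poly_Mapping.lookup w m)"
    by (rule sum.remove[OF fT v])
  also have "(\<Sum>w\<in>T-{v}. u w * Poly_Mapping.lookup w m) = 0"
  proof (rule sum.neutral, rule ballI)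
    fix w assume w: "w \<in> T - {v}"
    then have "Poly_Mapping.keys w \<inter> Poly_Mapping.keys v = {}" using dj T v by auto
    then have "Poly_Mapping.lookup w m = 0" using m by (auto simp: in_keys_iff)
    then show "u w * Poly_Mapping.lookup w m = 0" by simp
  qed
  finally show "u v = 0" using m by (simp add: in_keys_iff)
qed

definition Aelt :: "nat \<Rightarrow> nat \<Rightarrow> nat \<Rightarrow> nat \<Rightarrow> 'a::field mpoly" where
  "Aelt n d i a = DD (n+1) (n+2) a (i-a) (perazzo_poly n (PP n d) 0)"

definition wit :: "nat \<Rightarrow> nat \<Rightarrow> nat \<Rightarrow> nat \<Rightarrow> nat \<times> nat" where
  "wit n d i c = (SOME w. fst w \<le> n \<and> snd w < i \<and> snd w \<le> aa n d (fst w) \<and> c + snd w = aa n d (fst w) \<and> c \<le> d - i)"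

definition Belt :: "nat \<Rightarrow> nat \<Rightarrow> nat \<Rightarrow> nat \<Rightarrow> 'a::field mpoly" where
  "Belt n d i c = mderiv (fst (wit n d i c))
      (DD (n+1) (n+2) (snd (wit n d i c)) (i - 1 - snd (wit n d i c)) (perazzo_poly n (PP n d) 0))"

context
  fixes n d i :: nat
  assumes n2: "n \<ge> 2" and dn: "d \<ge> n + 1" and i1: "1 \<le> i" and id: "i \<le> d div 2"
begin

lemma wit: assumes "c \<in> CC n d i"
  shows "fst (wit n d i c) \<le> n \<and> snd (wit n d i c) < i \<and> snd (wit n d i c) \<le> aa n d (fst (wit n d i c))
     \<and> c + snd (wit n d i c) = aa n d (fst (wit n d i c)) \<and> c \<le> d - i"
proof -
  obtain j a' where "j \<le> n" "a' < i" "c + a' = aa n d j" "c \<le> d - i"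
    using assms by (auto simp: CC_def[OF n2 dn])
  then have "\<exists>w. fst w \<le> n \<and> snd w < i \<and> snd w \<le> aa n d (fst w) \<and> c + snd w = aa n d (fst w) \<and> c \<le> d - i"
    by (intro exI[of _ "(j, a')"]) simp
  then show ?thesis unfolding wit_def by (rule someI_ex)
qed

lemma Aelt_foldr: "Aelt n d i a = foldr mderiv (replicate a (n+1) @ replicate (i-a) (n+2)) (perazzo_poly n (PP n d) 0)"
  by (simp add: Aelt_def DD_def)

lemma Belt_foldr: "Belt n d i c = foldr mderiv (fst (wit n d i c) # replicate (snd (wit n d i c)) (n+1) @
       replicate (i - 1 - snd (wit n d i c)) (n+2)) (perazzo_poly n (PP n d) 0)"
  by (simp add: Belt_def DD_def)

lemma lookup_cntA: "Poly_Mapping.lookup (m + cnt (replicate a u @ replicate b v)) k =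
   Poly_Mapping.lookup m k + ((if k = u then a else 0) + (if k = v then b else 0))"
  by (simp add: lookup_add lookup_cnt_rep)

lemma lookup_cntB: "Poly_Mapping.lookup (m + cnt (j # replicate a u @ replicate b v)) k =
   Poly_Mapping.lookup m k + ((if k = j then 1 else 0) + ((if k = u then a else 0) + (if k = v then b else 0)))"
  by (auto simp add: lookup_add lookup_cnt_rep lookup_single when_def)

lemma A_keys:
  assumes "m \<in> Poly_Mapping.keys (Aelt n d i a :: 'a::field_char_0 mpoly)"
  shows "\<exists>j\<le>n. Poly_Mapping.lookup m j = 1 \<and> Poly_Mapping.lookup m (n+1) + a = aa n d j
     \<and> (\<forall>k\<le>n. k \<noteq> j \<longrightarrow> Poly_Mapping.lookup m k = 0)"
proof -
  obtain j where j: "j \<le> n" "m + cnt (replicate a (n+1) @ replicate (i-a) (n+2)) = EE n d j"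
    using assms unfolding Aelt_foldr keys_foldr_f0 by blast
  have l: "Poly_Mapping.lookup m k + ((if k = n+1 then a else 0) + (if k = n+2 then i - a else 0))
     = (if k = j then 1 else 0) + (if k = n+1 then aa n d j else 0) + (if k = n+2 then d - 1 - aa n d j else 0)" for k
    using arg_cong[OF j(2), of "\<lambda>m. Poly_Mapping.lookup m k"] j(1)
    by (simp only: lookup_add lookup_cnt_rep lookup_EE)
  have "\<forall>k\<le>n. k \<noteq> j \<longrightarrow> Poly_Mapping.lookup m k = 0"
  proof (intro allI impI)
    fix k assume "k \<le> n" "k \<noteq> j"
    then show "Poly_Mapping.lookup m k = 0" using l[of k] by simp
  qed
  then show ?thesis
    using l[of j] l[of "n+1"] j(1) by (intro exI[of _ j]) auto
qed

lemma B_keys: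
  assumes c: "c \<in> CC n d i" and m: "m \<in> Poly_Mapping.keys (Belt n d i c :: 'a::field_char_0 mpoly)"
  shows "Poly_Mapping.lookup m (n+1) = c \<and> (\<forall>k\<le>n. Poly_Mapping.lookup m k = 0)"
proof -
  define j where "j = fst (wit n d i c)"
  define a' where "a' = snd (wit n d i c)"
  have w: "j \<le> n" "a' < i" "a' \<le> aa n d j" "c + a' = aa n d j" "c \<le> d - i"
    using wit[OF c] unfolding j_def a'_def by auto
  obtain j' where j': "j' \<le> n" "m + cnt (j # replicate a' (n+1) @ replicate (i - 1 - a') (n+2)) = EE n d j'"
    using m unfolding Belt_foldr keys_foldr_f0 j_def a'_def by blast
  have l: "Poly_Mapping.lookup m k + ((if k = j then 1 else 0) + ((if k = n+1 then a' else 0) + (if k = n+2 then i - 1 - a' else 0)))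
     = (if k = j' then 1 else 0) + (if k = n+1 then aa n d j' else 0) + (if k = n+2 then d - 1 - aa n d j' else 0)" for k
    using arg_cong[OF j'(2), of "\<lambda>m. Poly_Mapping.lookup m k"] j'(1)
    by (simp only: lookup_cntB lookup_EE)
  have "j' = j" using l[of j] w(1) by (auto split: if_splits)
  have "\<forall>k\<le>n. Poly_Mapping.lookup m k = 0"
  proof (intro allI impI)
    fix k assume "k \<le> n"
    then show "Poly_Mapping.lookup m k = 0" using l[of k] \<open>j' = j\<close> by (auto split: if_splits)
  qed
  then show ?thesis using l[of "n+1"] w \<open>j' = j\<close> by auto
qed


lemma A_nz: assumes "a \<le> i" shows "(Aelt n d i a :: 'a::field_char_0 mpoly) \<noteq> 0"
proof -
  obtain j where j: "j \<le> n" "a \<le> aa n d j" "aa n d j + i \<le> d - 1 + a"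
    using condA[OF n2 dn i1 id assms] by auto
  define m0 where "m0 = ev j + mono2 n (aa n d j - a) (d - 1 - aa n d j - (i - a))"
  have ar: "d - 1 - aa n d j - (i - a) + (i - a) = d - 1 - aa n d j" "aa n d j - a + a = aa n d j"
  proof -
    have "aa n d j \<le> d - 1" by (rule aa_le[OF n2 dn j(1)])
    then have e1: "d - 1 - aa n d j + aa n d j = d - 1" by simp
    have e2: "i - a + a = i" using assms by simp
    have "i - a \<le> d - 1 - aa n d j" using e1 e2 j(3) by linarith
    then show "d - 1 - aa n d j - (i - a) + (i - a) = d - 1 - aa n d j" by simp
    show "aa n d j - a + a = aa n d j" using j(2) by simp
  qed
  have "m0 + cnt (replicate a (n+1) @ replicate (i-a) (n+2)) = EE n d j"
  proof (rule poly_mapping_eqI)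
    fix k
    show "Poly_Mapping.lookup (m0 + cnt (replicate a (n+1) @ replicate (i-a) (n+2))) k = Poly_Mapping.lookup (EE n d j) k"
      unfolding lookup_cntA lookup_EE[OF j(1)] unfolding m0_def lookup_add lookup_mono2 lookup_single when_def
      using j(1) ar by (cases "k = j"; cases "k = n+1"; cases "k = n+2") auto
  qed
  then have "m0 \<in> Poly_Mapping.keys (Aelt n d i a :: 'a mpoly)"
    unfolding Aelt_foldr keys_foldr_f0 using j by blast
  then show ?thesis by auto
qed

lemma B_nz: assumes c: "c \<in> CC n d i" shows "(Belt n d i c :: 'a::field_char_0 mpoly) \<noteq> 0"
proof -
  define j where "j = fst (wit n d i c)"
  define a' where "a' = snd (wit n d i c)"
  have w: "j \<le> n" "a' < i" "a' \<le> aa n d j" "c + a' = aa n d j" "c \<le> d - i"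
    using wit[OF c] unfolding j_def a'_def by auto
  define m0 where "m0 = mono2 n c (d - i - c)"
  have ar: "d - i - c + (i - 1 - a') = d - 1 - aa n d j"
  proof -
    have "aa n d j \<le> d - 1" by (rule aa_le[OF n2 dn w(1)])
    then have e1: "d - 1 - aa n d j + aa n d j + 1 = d" using dn by linarith
    have e2: "d - i + i = d" using id by linarith
    have e3: "d - i - c + c = d - i" using w(5) by simp
    have e4: "i - 1 - a' + a' + 1 = i" using w(2) by linarith
    show ?thesis using e1 e2 e3 e4 w(4) by linarith
  qed
  have "m0 + cnt (j # replicate a' (n+1) @ replicate (i - 1 - a') (n+2)) = EE n d j"
  proof (rule poly_mapping_eqI)
    fix k
    show "Poly_Mapping.lookup (m0 + cnt (j # replicate a' (n+1) @ replicate (i - 1 - a') (n+2))) k = Poly_Mapping.lookup (EE n d j) k"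
      unfolding lookup_cntB lookup_EE[OF w(1)] m0_def lookup_mono2
      using w(1,4) ar by (cases "k = j"; cases "k = n+1"; cases "k = n+2") auto
  qed
  then have "m0 \<in> Poly_Mapping.keys (Belt n d i c :: 'a mpoly)"
    unfolding Belt_foldr keys_foldr_f0 j_def a'_def using w(1) j_def by blast
  then show ?thesis by auto
qed

end



lemma nz_key: "(x::'a::zero mpoly) \<noteq> 0 \<Longrightarrow> \<exists>m. m \<in> Poly_Mapping.keys x"
  by (metis all_not_in_conv keys_eq_empty)

context
  fixes n d i :: nat
  assumes n2: "n \<ge> 2" and dn: "d \<ge> n + 1" and i1: "1 \<le> i" and id: "i \<le> d div 2"
begin

lemma AA: assumes "m \<in> Poly_Mapping.keys (Aelt n d i a :: 'a::field_char_0 mpoly)" "m \<in> Poly_Mapping.keys (Aelt n d i a' :: 'a mpoly)"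
  shows "a = a'"
proof -
  obtain j where j: "j \<le> n" "Poly_Mapping.lookup m j = 1" "Poly_Mapping.lookup m (n+1) + a = aa n d j"
     "\<forall>k\<le>n. k \<noteq> j \<longrightarrow> Poly_Mapping.lookup m k = 0" using A_keys[OF n2 dn i1 id assms(1)] by blast
  obtain j' where j': "j' \<le> n" "Poly_Mapping.lookup m j' = 1" "Poly_Mapping.lookup m (n+1) + a' = aa n d j'"
     "\<forall>k\<le>n. k \<noteq> j' \<longrightarrow> Poly_Mapping.lookup m k = 0" using A_keys[OF n2 dn i1 id assms(2)] by blast
  have "j = j'" using j j' by (metis zero_neq_one)
  then show ?thesis using j j' by simp
qed

lemma AB: assumes c: "c \<in> CC n d i" and "m \<in> Poly_Mapping.keys (Aelt n d i a :: 'a::field_char_0 mpoly)" "m \<in> Poly_Mapping.keys (Belt n d i c :: 'a mpoly)"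
  shows False
proof -
  obtain j where j: "j \<le> n" "Poly_Mapping.lookup m j = 1" using A_keys[OF n2 dn i1 id assms(2)] by blast
  have "\<forall>k\<le>n. Poly_Mapping.lookup m k = 0" using B_keys[OF n2 dn i1 id c assms(3)] by blast
  then show False using j by simp
qed

lemma BB: assumes c: "c \<in> CC n d i" "c' \<in> CC n d i"
  and "m \<in> Poly_Mapping.keys (Belt n d i c :: 'a::field_char_0 mpoly)" "m \<in> Poly_Mapping.keys (Belt n d i c' :: 'a mpoly)"
  shows "c = c'"
  using B_keys[OF n2 dn i1 id c(1) assms(3)] B_keys[OF n2 dn i1 id c(2) assms(4)] by simp

lemma in_partials:
  shows "a \<le> i \<Longrightarrow> Aelt n d i a \<in> partials n i (perazzo_poly n (PP n d) 0)"
    and "c \<in> CC n d i \<Longrightarrow> Belt n d i c \<in> partials n i (perazzo_poly n (PP n d) 0)"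
proof -
  assume "a \<le> i"
  then show "Aelt n d i a \<in> partials n i (perazzo_poly n (PP n d) 0)"
    unfolding partials_def
    by (intro CollectI exI[of _ "replicate a (n+1) @ replicate (i-a) (n+2)"] conjI) (auto simp only: Aelt_foldr[OF n2 dn i1 id], auto)
next
  assume c: "c \<in> CC n d i"
  have w: "fst (wit n d i c) \<le> n" "snd (wit n d i c) < i" using wit[OF n2 dn i1 id c] by auto
  then show "Belt n d i c \<in> partials n i (perazzo_poly n (PP n d) 0)"
    unfolding partials_def
    by (intro CollectI exI[of _ "fst (wit n d i c) # replicate (snd (wit n d i c)) (n+1) @ replicate (i - 1 - snd (wit n d i c)) (n+2)"] conjI)
      (auto simp only: Belt_foldr[OF n2 dn i1 id], auto)
qed

lemma hvec_lower: "i + 1 + card (CC n d i) \<le> hvec n (perazzo_poly n (PP n d) 0 :: 'a::field_char_0 mpoly) i"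
proof -
  let ?f = "perazzo_poly n (PP n d) 0 :: 'a mpoly"
  let ?A = "(Aelt n d i :: nat \<Rightarrow> 'a mpoly) ` {0..i}"
  let ?B = "(Belt n d i :: nat \<Rightarrow> 'a mpoly) ` CC n d i"
  let ?I = "?A \<union> ?B"
  have finC: "finite (CC n d i)" by (rule finite_subset[OF CC_sub[OF n2 dn]]) simp
  have injA: "inj_on (Aelt n d i :: nat \<Rightarrow> 'a mpoly) {0..i}"
  proof (rule inj_onI)
    fix a a' assume a: "a \<in> {0..i}" "a' \<in> {0..i}" and e: "(Aelt n d i a :: 'a mpoly) = Aelt n d i a'"
    have "(Aelt n d i a :: 'a mpoly) \<noteq> 0" by (rule A_nz[OF n2 dn i1 id]) (use a in simp)
    then obtain m where m1: "m \<in> Poly_Mapping.keys (Aelt n d i a :: 'a mpoly)" using nz_key by blast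
    have m2: "m \<in> Poly_Mapping.keys (Aelt n d i a' :: 'a mpoly)" using m1 e by simp
    show "a = a'" by (rule AA[OF m1 m2])
  qed
  have injB: "inj_on (Belt n d i :: nat \<Rightarrow> 'a mpoly) (CC n d i)"
  proof (rule inj_onI)
    fix c c' assume c: "c \<in> CC n d i" "c' \<in> CC n d i" and e: "(Belt n d i c :: 'a mpoly) = Belt n d i c'"
    have "(Belt n d i c :: 'a mpoly) \<noteq> 0" by (rule B_nz[OF n2 dn i1 id c(1)])
    then obtain m where m1: "m \<in> Poly_Mapping.keys (Belt n d i c :: 'a mpoly)" using nz_key by blast
    have m2: "m \<in> Poly_Mapping.keys (Belt n d i c' :: 'a mpoly)" using m1 e by simp
    show "c = c'" by (rule BB[OF c m1 m2])
  qed
  have disj: "?A \<inter> ?B = {}"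
  proof (rule ccontr)
    assume "?A \<inter> ?B \<noteq> {}"
    then obtain a c where a: "a \<le> i" and c: "c \<in> CC n d i" and e: "(Aelt n d i a :: 'a mpoly) = Belt n d i c" by auto
    have "(Aelt n d i a :: 'a mpoly) \<noteq> 0" by (rule A_nz[OF n2 dn i1 id a])
    then obtain m where m1: "m \<in> Poly_Mapping.keys (Aelt n d i a :: 'a mpoly)" using nz_key by blast
    have m2: "m \<in> Poly_Mapping.keys (Belt n d i c :: 'a mpoly)" using m1 e by simp
    show False by (rule AB[OF c m1 m2])
  qed
  have cardI: "card ?I = i + 1 + card (CC n d i)"
    using card_Un_disjoint[OF _ _ disj] card_image[OF injA] card_image[OF injB] finC by simp
  have indI: "mvs.independent ?I"
  proof (rule indep_disjoint)
    show "0 \<notin> ?I" using A_nz[OF n2 dn i1 id] B_nz[OF n2 dn i1 id] by fastforce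
  next
    fix x y assume x: "x \<in> ?I" and y: "y \<in> ?I" and xy: "x \<noteq> y"
    show "Poly_Mapping.keys x \<inter> Poly_Mapping.keys y = {}"
    proof (rule ccontr)
      assume "Poly_Mapping.keys x \<inter> Poly_Mapping.keys y \<noteq> {}"
      then obtain m where mx: "m \<in> Poly_Mapping.keys x" and my: "m \<in> Poly_Mapping.keys y" by auto
      from x consider (xa) a where "a \<le> i" "x = Aelt n d i a" | (xb) c where "c \<in> CC n d i" "x = Belt n d i c"
        by auto
      then show False
      proof cases
        case xa
        from y consider (ya) a' where "a' \<le> i" "y = Aelt n d i a'" | (yb) c' where "c' \<in> CC n d i" "y = Belt n d i c'"
          by auto
        then show False
        proof cases
          case ya
          have "a = a'" by (rule AA) (use mx my xa ya in simp_all)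
          then show False using xy xa ya by simp
        next
          case yb
          show False by (rule AB[OF yb(1)]) (use mx my xa yb in simp_all)
        qed
      next
        case xb
        from y consider (ya) a' where "a' \<le> i" "y = Aelt n d i a'" | (yb) c' where "c' \<in> CC n d i" "y = Belt n d i c'"
          by auto
        then show False
        proof cases
          case ya
          show False by (rule AB[OF xb(1)]) (use mx my ya xb in simp_all)
        next
          case yb
          have "c = c'" by (rule BB[OF xb(1) yb(1)]) (use mx my xb yb in simp_all)
          then show False using xy xb yb by simp
        qed
      qed
    qed
  qed
  have fp: "\<forall>j\<le>n. is_form_in {n+1, n+2} (d-1) (PP n d j :: 'a mpoly)" using PD1[OF n2 dn] by blast
  have fg: "is_form_in {n+1, n+2} d (0::'a mpoly)" by (simp add: is_form_in_def)
  have sp: "partials n i ?f \<subseteq> mvs.span (Aset n i ?f \<union> Bset n i ?f)"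
    by (rule partials_span(1)[OF fp fg])
  obtain B where B: "B \<subseteq> partials n i ?f" "mvs.independent B" "partials n i ?f \<subseteq> mvs.span B"
      "card B = mvs.dim (partials n i ?f)"
    by (rule mvs.basis_exists)
  have "B \<subseteq> mvs.span (Aset n i ?f \<union> Bset n i ?f)" using B(1) sp by (rule order_trans)
  moreover have "finite (Aset n i ?f \<union> Bset n i ?f)" by (simp add: finite_sets)
  ultimately have finB: "finite B"
    using mvs.independent_span_bound[OF _ B(2)] by blast
  have "?I \<subseteq> partials n i ?f" using in_partials by auto
  then have "?I \<subseteq> mvs.span B" using B(3) by (rule order_trans)
  then have "card ?I \<le> card B"
    using mvs.independent_span_bound[OF finB indI] by simp
  then show ?thesis using cardI B(4) by (simp add: hvec_def)
qed

end

theorem theorem3p5: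
  fixes n d :: nat
  assumes alg_closed: "\<forall>q :: 'a::field_char_0 poly. degree q \<ge> 1 \<longrightarrow> (\<exists>x. poly q x = 0)"
    and n2: "n \<ge> 2"
    and dn: "d \<ge> n + 1"
  shows "(\<forall>f :: 'a mpoly. is_perazzo_form n d f \<longrightarrow>
            (\<forall>i. 1 \<le> i \<and> i \<le> d div 2 \<longrightarrow> hvec n f i \<le> min ((n + 2) * i + 1) (d + 2)))
       \<and> (\<exists>p :: nat \<Rightarrow> 'a mpoly. perazzo_data n d p 0 \<and>
            (\<forall>i. 1 \<le> i \<and> i \<le> d div 2 \<longrightarrow>
                 hvec n (perazzo_poly n p 0) i = min ((n + 2) * i + 1) (d + 2)))"
proof (intro conjI allI impI)
  fix f :: "'a mpoly" and i assume f: "is_perazzo_form n d f" and i: "1 \<le> i \<and> i \<le> d div 2"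
  obtain p g where pg: "perazzo_data n d p g" "f = perazzo_poly n p g"
    using f unfolding is_perazzo_form_def by blast
  have fp: "\<forall>j\<le>n. is_form_in {n+1, n+2} (d-1) (p j)" and fg: "is_form_in {n+1, n+2} d g"
    using pg(1) unfolding perazzo_data_def by blast+
  show "hvec n f i \<le> min ((n + 2) * i + 1) (d + 2)"
    unfolding pg(2) by (rule hvec_upper[OF fp fg]) (use i in linarith)
next
  show "\<exists>p :: nat \<Rightarrow> 'a mpoly. perazzo_data n d p 0 \<and>
            (\<forall>i. 1 \<le> i \<and> i \<le> d div 2 \<longrightarrow>
                 hvec n (perazzo_poly n p 0) i = min ((n + 2) * i + 1) (d + 2))"
  proof (intro exI[of _ "PP n d"] conjI allI impI)
    show "perazzo_data n d (PP n d :: nat \<Rightarrow> 'a mpoly) 0" by (rule perazzo_PP[OF n2 dn])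
  next
    fix i assume i: "1 \<le> i \<and> i \<le> d div 2"
    have fp: "\<forall>j\<le>n. is_form_in {n+1, n+2} (d-1) (PP n d j :: 'a mpoly)" using PD1[OF n2 dn] by blast
    have fg: "is_form_in {n+1, n+2} d (0::'a mpoly)" by (simp add: is_form_in_def)
    have up: "hvec n (perazzo_poly n (PP n d) 0 :: 'a mpoly) i \<le> min ((n + 2) * i + 1) (d + 2)"
      by (rule hvec_upper[OF fp fg]) (use i in linarith)
    have lo: "i + 1 + card (CC n d i) \<le> hvec n (perazzo_poly n (PP n d) 0 :: 'a mpoly) i"
      using hvec_lower[OF n2 dn] i by blast
    have cc: "card (CC n d i) \<ge> min ((n+1) * i) (d - i + 1)"
      using card_CC[OF n2 dn] i by blast
    have e1: "(n+2)*i + 1 = i + 1 + (n+1)*i" by (simp add: algebra_simps)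
    have "i \<le> d" using i by linarith
    then have e2: "d + 2 = i + 1 + (d - i + 1)" by simp
    have "min ((n + 2) * i + 1) (d + 2) = i + 1 + min ((n+1) * i) (d - i + 1)"
      unfolding e1 e2 by (simp add: min_def)
    then show "hvec n (perazzo_poly n (PP n d) 0 :: 'a mpoly) i = min ((n + 2) * i + 1) (d + 2)"
      using up lo cc by linarith
  qed
qed


end
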